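(* For every $\mathsf T$-term $P$ and every $*$-term $Q$, the tree $se(P\land^\circ Q)$ has exactly one $\mathsf T$-$*$-decomposition, namely $(se(P)[\mathsf T\mapsto\triangle],\,se(Q))$.
   Context: Let $A$ be a nonempty set of atoms; terms are closed terms over constants $\mathsf T,\mathsf F$, atoms $a\in A$, unary $\neg$, binary $\land^\circ$, $\lor^\circ$. Evaluation trees $\mathcal T_A$: $\mathsf T,\mathsf F\in\mathcal T_A$ and $(X\unlhd a\unrhd Y)\in\mathcal T_A$ for $X,Y\in\mathcal T_A$, $a\in A$; depth $d(\mathsf T)=d(\mathsf F)=0$, $d(Y\unlhd a\unrhd Z)=1+\max(d(Y),d(Z))$. $\mathcal T_{A,\triangle}$: the same with leaves in $\{\mathsf T,\mathsf F,\triangle\}$. Leaf replacement $X[\ell_1\mapsto Y_1,\ldots]$ replaces every leaf labelled $\ell_i$ by $Y_i$. $se$: $se(\mathsf T)=\mathsf T$, $se(\mathsf F)=\mathsf F$, $se(a)=\mathsf T\unlhd a\unrhd\mathsf F$, $se(\neg P)=se(P)[\mathsf T\mapsto\mathsf F,\mathsf F\mapsto\mathsf T]$, $se(P\land^\circ Q)=se(P)[\mathsf T\mapsto se(Q)]$, $se(P\lor^\circ Q)=se(P)[\mathsf F\mapsto se(Q)]$. Syntactic categories ($a\in A$): $\mathsf T$-terms $P^{\mathsf T}::=\mathsf T\mid(a\land^\circ P^{\mathsf T})\lor^\circ P^{\mathsf T}$; $\mathsf F$-terms $P^{\mathsf F}::=\mathsf F\mid(a\lor^\circ P^{\mathsf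 F})\land^\circ P^{\mathsf F}$; $\ell$-terms $P^\ell::=(a\land^\circ P^{\mathsf T})\lor^\circ P^{\mathsf F}\mid(\neg a\land^\circ P^{\mathsf T})\lor^\circ P^{\mathsf F}$; $*$-terms $P^*::=P^c\mid P^d$, $P^c::=P^\ell\mid P^*\land^\circ P^d$, $P^d::=P^\ell\mid P^*\lor^\circ P^c$. A pair $(Y,Z)\in\mathcal T_{A,\triangle}\times\mathcal T_A$ is a candidate $\mathsf T$-$*$-decomposition (ctsd) of $X\in\mathcal T_A$ if $X=Y[\triangle\mapsto Z]$, $Y$ contains neither $\mathsf T$ nor $\mathsf F$, $Z$ contains both $\mathsf T$ and $\mathsf F$, and there is no pair $(U,V)\in\mathcal T_{A,\triangle}\times\mathcal T_A$ with $Z=U[\triangle\mapsto V]$, $U$ containing $\triangle$, $U\neq\triangle$, and $U$ containing neither $\mathsf T$ nor $\mathsf F$. A ctsd $(Y,Z)$ of $X$ is a $\mathsf T$-$*$-decomposition (tsd) if there is no other ctsd $(Y',Z')$ of $X$ with $d(Z')<d(Z)$. *)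

theory Defs
  imports Main
begin

text \<open>Atoms are the elements of the (nonempty) type 'a, playing the role of A.\<close>

datatype 'a pterm =
    Tc | Fc | Atom 'a | Neg "'a pterm"
  | LAnd "'a pterm" "'a pterm"
  | LOr "'a pterm" "'a pterm"

datatype leaf = LT | LF | LTri

text \<open>Evaluation trees with leaves in {T, F, triangle};
  Node X a Y stands for X \<unlhd> a \<unrhd> Y.  Trees in T_A are those without LTri leaves.\<close>
datatype 'a tree = Leaf leaf | Node "'a tree" 'a "'a tree"

fun leaves :: "'a tree \<Rightarrow> leaf set" where
  "leaves (Leaf l) = {l}"
| "leaves (Node X a Y) = leaves X \<union> leaves Y"

fun depth :: "'a tree \<Rightarrow> nat" where
  "depth (Leaf l) = 0"
| "depth (Node X a Y) = 1 + max (depth X) (depth Y)"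

fun repl :: "(leaf \<Rightarrow> 'a tree) \<Rightarrow> 'a tree \<Rightarrow> 'a tree" where
  "repl f (Leaf l) = f l"
| "repl f (Node X a Y) = Node (repl f X) a (repl f Y)"

fun se :: "'a pterm \<Rightarrow> 'a tree" where
  "se Tc = Leaf LT"
| "se Fc = Leaf LF"
| "se (Atom a) = Node (Leaf LT) a (Leaf LF)"
| "se (Neg P) = repl ((\<lambda>l. Leaf l)(LT := Leaf LF, LF := Leaf LT)) (se P)"
| "se (LAnd P Q) = repl ((\<lambda>l. Leaf l)(LT := se Q)) (se P)"
| "se (LOr P Q) = repl ((\<lambda>l. Leaf l)(LF := se Q)) (se P)"

inductive Tterm :: "'a pterm \<Rightarrow> bool" where
  "Tterm Tc"
| "Tterm P \<Longrightarrow> Tterm Q \<Longrightarrow> Tterm (LOr (LAnd (Atom a) P) Q)"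

inductive Fterm :: "'a pterm \<Rightarrow> bool" where
  "Fterm Fc"
| "Fterm P \<Longrightarrow> Fterm Q \<Longrightarrow> Fterm (LAnd (LOr (Atom a) P) Q)"

inductive lterm :: "'a pterm \<Rightarrow> bool" where
  "Tterm P \<Longrightarrow> Fterm Q \<Longrightarrow> lterm (LOr (LAnd (Atom a) P) Q)"
| "Tterm P \<Longrightarrow> Fterm Q \<Longrightarrow> lterm (LOr (LAnd (Neg (Atom a)) P) Q)"

inductive cterm and dterm :: "'a pterm \<Rightarrow> bool" where
  "lterm P \<Longrightarrow> cterm P"
| "cterm P \<Longrightarrow> dterm Q \<Longrightarrow> cterm (LAnd P Q)"
| "dterm P \<Longrightarrow> dterm Q \<Longrightarrow> cterm (LAnd P Q)"
| "lterm P \<Longrightarrow> dterm P"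
| "cterm P \<Longrightarrow> cterm Q \<Longrightarrow> dterm (LOr P Q)"
| "dterm P \<Longrightarrow> cterm Q \<Longrightarrow> dterm (LOr P Q)"

definition starterm :: "'a pterm \<Rightarrow> bool" where
  "starterm P \<longleftrightarrow> cterm P \<or> dterm P"

definition ctsd :: "'a tree \<Rightarrow> 'a tree \<Rightarrow> 'a tree \<Rightarrow> bool" where
  "ctsd X Y Z \<longleftrightarrow>
     LTri \<notin> leaves Z \<and>
     X = repl ((\<lambda>l. Leaf l)(LTri := Z)) Y \<and>
     LT \<notin> leaves Y \<and> LF \<notin> leaves Y \<and>
     LT \<in> leaves Z \<and> LF \<in> leaves Z \<and>
     \<not> (\<exists>U V. LTri \<notin> leaves V \<and> Z = repl ((\<lambda>l. Leaf l)(LTri := V)) U \<and>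
              LTri \<in> leaves U \<and> U \<noteq> Leaf LTri \<and> LT \<notin> leaves U \<and> LF \<notin> leaves U)"

definition tsd :: "'a tree \<Rightarrow> 'a tree \<Rightarrow> 'a tree \<Rightarrow> bool" where
  "tsd X Y Z \<longleftrightarrow> ctsd X Y Z \<and>
     \<not> (\<exists>Y' Z'. (Y', Z') \<noteq> (Y, Z) \<and> ctsd X Y' Z' \<and> depth Z' < depth Z)"

end

theory Submission
  imports Defs
begin

abbreviation sub :: "leaf \<Rightarrow> 'a tree \<Rightarrow> 'a tree \<Rightarrow> 'a tree" where
  "sub l S t \<equiv> repl ((\<lambda>l. Leaf l)(l := S)) t"

definition indec :: "'a tree \<Rightarrow> bool" where
  "indec Z \<longleftrightarrow> \<not> (\<exists>U V. LTri \<notin> leaves V \<and> Z = repl ((\<lambda>l. Leaf l)(LTri := V)) U \<and>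
              LTri \<in> leaves U \<and> U \<noteq> Leaf LTri \<and> LT \<notin> leaves U \<and> LF \<notin> leaves U)"

lemma leaves_ne: "leaves t \<noteq> {}"
  by (induction t) auto

lemma leaves_repl: "leaves (repl f t) = (\<Union>l\<in>leaves t. leaves (f l))"
  by (induction t) auto

lemma repl_repl: "repl f (repl g t) = repl (\<lambda>l. repl f (g l)) t"
  by (induction t) auto

lemma repl_cong: "(\<And>l. l \<in> leaves t \<Longrightarrow> f l = g l) \<Longrightarrow> repl f t = repl g t"
  by (induction t) auto

lemma sub_id: "l \<notin> leaves t \<Longrightarrow> sub l S t = t"
proof -
  assume "l \<notin> leaves t"
  hence "sub l S t = repl Leaf t" by (intro repl_cong) auto
  also have "\<dots> = t" by (induction t) auto
  finally show ?thesis .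
qed

lemma depth_sub_le: "l \<in> leaves B \<Longrightarrow> depth S \<le> depth (sub l S B)"
  by (induction B) auto

lemma depth_sub_lt: "l \<in> leaves B \<Longrightarrow> B \<noteq> Leaf l \<Longrightarrow> depth S < depth (sub l S B)"
  by (cases B) (auto dest: depth_sub_le[where S=S] simp: less_Suc_eq_le)

lemma sub_eq_S: "l \<in> leaves S \<Longrightarrow> sub l S B = S \<Longrightarrow> B = Leaf l"
proof (cases "l \<in> leaves B")
  case True
  assume "sub l S B = S"
  then show ?thesis using depth_sub_lt[OF True, of S] by fastforce
next
  case False
  assume "l \<in> leaves S" "sub l S B = S"
  then show ?thesis using sub_id[OF False, of S] False by auto
qed

lemma sub_inj: "l \<in> leaves S \<Longrightarrow> sub l S A = sub l S B \<Longrightarrow> A = B"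
proof (induction A arbitrary: B)
  case (Leaf x)
  show ?case
  proof (cases "x = l")
    case True
    have "sub l S (Leaf l) = S" by simp
    hence "sub l S B = S" using Leaf.prems True by metis
    then show ?thesis using Leaf.prems(1) sub_eq_S[of l S B] True by simp
  next
    case False
    then show ?thesis using Leaf by (cases B) (auto split: if_splits)
  qed
next
  case (Node A1 a A2)
  show ?case
  proof (cases B)
    case (Leaf y)
    show ?thesis
    proof (cases "y = l")
      case True
      have "sub l S (Leaf l) = S" by simp
      hence "sub l S (Node A1 a A2) = S" using Node.prems Leaf True by metis
      then show ?thesis using sub_eq_S[OF Node.prems(1)] by blast
    next
      case False
      then show ?thesis using Node.prems Leaf by auto
    qed
  next
    case (Node B1 b B2)
    then show ?thesis using Node.prems Node.IH by auto
  qed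
qed

lemma depth_tri: "leaves U \<subseteq> {LTri} \<Longrightarrow> depth (sub LTri V U) = depth U + depth V"
  by (induction U) auto

lemma key:
  assumes "l \<noteq> LTri" "l \<in> leaves S" "indec S" "leaves U \<subseteq> {LTri}" "LTri \<notin> leaves R"
    "LTri \<notin> leaves V" "sub l S R = sub LTri V U"
  shows "\<exists>W. R = sub LTri W U \<and> V = sub l S W"
  using assms
proof (induction U arbitrary: R)
  case (Leaf x)
  then show ?case by (intro exI[of _ R]) auto
next
  case (Node U1 a U2)
  show ?case
  proof (cases R)
    case (Leaf y)
    show ?thesis
    proof (cases "y = l")
      case True
      have "sub l S (Leaf l) = S" by simp
      then have "S = sub LTri V (Node U1 a U2)" using Node.prems(7) True Leaf by metis
      moreover have "LTri \<in> leaves (Node U1 a U2)" using Node.prems(4) leaves_ne[of U1] by auto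
      moreover have "LT \<notin> leaves (Node U1 a U2)" "LF \<notin> leaves (Node U1 a U2)" using Node.prems(4) by auto
      ultimately show ?thesis using Node.prems(3,6) unfolding indec_def by blast
    next
      case False
      then show ?thesis using Node.prems Leaf by simp
    qed
  next
    case (Node R1 b R2)
    have "Node (sub l S R1) b (sub l S R2) = Node (sub LTri V U1) a (sub LTri V U2)"
      using Node.prems(7) \<open>R = _\<close> by (simp only: repl.simps)
    hence e1: "sub l S R1 = sub LTri V U1" and e2: "sub l S R2 = sub LTri V U2"
      and ab: "a = b" by (simp_all only: tree.inject)
    obtain W1 where w1: "R1 = sub LTri W1 U1" "V = sub l S W1"
    proof -
      have "leaves U1 \<subseteq> {LTri}" "LTri \<notin> leaves R1" using Node.prems(4,5) \<open>R = _\<close> by auto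
      from Node.IH(1)[OF Node.prems(1-3) this Node.prems(6) e1] show ?thesis using that by blast
    qed
    obtain W2 where w2: "R2 = sub LTri W2 U2" "V = sub l S W2"
    proof -
      have "leaves U2 \<subseteq> {LTri}" "LTri \<notin> leaves R2" using Node.prems(4,5) \<open>R = _\<close> by auto
      from Node.IH(2)[OF Node.prems(1-3) this Node.prems(6) e2] show ?thesis using that by blast
    qed
    have "W1 = W2" using sub_inj[OF Node.prems(2)] w1 w2 by metis
    then show ?thesis using w1 w2 ab \<open>R = _\<close> by (intro exI[of _ W1]) (simp add: fun_upd_def)
  qed
qed

lemma prefA: "leaves Y \<subseteq> {LTri} \<Longrightarrow> leaves Y' \<subseteq> {LTri} \<Longrightarrow>
  sub LTri Z Y = sub LTri Z' Y' \<Longrightarrow> depth Z = depth Z' \<Longrightarrow> Y = Y' \<and> Z = Z'"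
proof (induction Y arbitrary: Y')
  case (Leaf x)
  show ?case
  proof (cases Y')
    case (Leaf y) then show ?thesis using Leaf.prems by auto
  next
    case (Node Y1 b Y2)
    have "depth Z = depth Y' + depth Z'" using Leaf.prems depth_tri[of Y' Z'] by (auto simp: fun_upd_def)
    then show ?thesis using Node Leaf.prems by simp
  qed
next
  case (Node Y1 a Y2)
  show ?case
  proof (cases Y')
    case (Leaf y)
    have "depth Z' = depth (Node Y1 a Y2) + depth Z" using Node.prems depth_tri[of "Node Y1 a Y2" Z] Leaf by (auto simp: fun_upd_def)
    then show ?thesis using Node.prems by simp
  next
    case (Node Y1' b Y2')
    have "Node (sub LTri Z Y1) a (sub LTri Z Y2) = Node (sub LTri Z' Y1') b (sub LTri Z' Y2')"
      using Node.prems(3) \<open>Y' = _\<close> by (simp only: repl.simps)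
    hence e: "sub LTri Z Y1 = sub LTri Z' Y1'" "sub LTri Z Y2 = sub LTri Z' Y2'" "a = b"
      by (simp_all only: tree.inject)
    have "Y1 = Y1' \<and> Z = Z'" using Node.IH(1)[OF _ _ e(1) Node.prems(4)] Node.prems(1,2) \<open>Y' = _\<close> by auto
    moreover have "Y2 = Y2'" using Node.IH(2)[OF _ _ e(2) Node.prems(4)] Node.prems(1,2) \<open>Y' = _\<close> by auto
    ultimately show ?thesis using e(3) \<open>Y' = _\<close> by simp
  qed
qed

lemma prefB: "leaves Y \<subseteq> {LTri} \<Longrightarrow> leaves Y' \<subseteq> {LTri} \<Longrightarrow>
  sub LTri Z Y = sub LTri Z' Y' \<Longrightarrow> depth Z' \<le> depth Z \<Longrightarrow> \<exists>W. leaves W \<subseteq> {LTri} \<and> Z = sub LTri Z' W"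
proof (induction Y arbitrary: Y')
  case (Leaf x)
  then show ?case by (intro exI[of _ Y']) (auto simp: fun_upd_def)
next
  case (Node Y1 a Y2)
  show ?case
  proof (cases Y')
    case (Leaf y)
    have "depth Z' = depth (Node Y1 a Y2) + depth Z" using Node.prems depth_tri[of "Node Y1 a Y2" Z] Leaf by (auto simp: fun_upd_def)
    then show ?thesis using Node.prems by simp
  next
    case (Node Y1' b Y2')
    have "Node (sub LTri Z Y1) a (sub LTri Z Y2) = Node (sub LTri Z' Y1') b (sub LTri Z' Y2')"
      using Node.prems(3) \<open>Y' = _\<close> by (simp only: repl.simps)
    hence e: "sub LTri Z Y1 = sub LTri Z' Y1'"
      by (simp_all only: tree.inject)
    show ?thesis using Node.IH(1)[OF _ _ e Node.prems(4)] Node.prems(1,2) \<open>Y' = _\<close> by auto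
  qed
qed

lemma tri_only: "(LT \<notin> leaves Y \<and> LF \<notin> leaves Y) \<longleftrightarrow> leaves Y \<subseteq> {LTri}"
  by (auto, metis leaf.exhaust)

lemma ctsd_unique: "ctsd X Y Z \<Longrightarrow> ctsd X Y' Z' \<Longrightarrow> depth Z' \<le> depth Z \<Longrightarrow> Y = Y' \<and> Z = Z'"
proof -
  assume c: "ctsd X Y Z" "ctsd X Y' Z'" and d: "depth Z' \<le> depth Z"
  have y: "leaves Y \<subseteq> {LTri}" "leaves Y' \<subseteq> {LTri}" using c tri_only unfolding ctsd_def by auto
  have e: "sub LTri Z Y = sub LTri Z' Y'" using c unfolding ctsd_def by auto
  show ?thesis
  proof (cases "depth Z' = depth Z")
    case True then show ?thesis using prefA[OF y e] by simp
  next
    case False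
    obtain W where w: "leaves W \<subseteq> {LTri}" "Z = sub LTri Z' W" using prefB[OF y e d] by blast
    have "depth Z = depth W + depth Z'" using depth_tri[OF w(1)] w(2) by simp
    hence "W \<noteq> Leaf LTri" using False by auto
    moreover have "LTri \<in> leaves W" using w(1) leaves_ne[of W] by auto
    moreover have "LT \<notin> leaves W" "LF \<notin> leaves W" using w(1) by auto
    moreover have "LTri \<notin> leaves Z'" using c(2) unfolding ctsd_def by auto
    ultimately show ?thesis using c(1) w(2) unfolding ctsd_def by blast
  qed
qed

lemma ctsd_unique2: "ctsd X Y Z \<Longrightarrow> ctsd X Y' Z' \<Longrightarrow> Y = Y' \<and> Z = Z'"
  by (metis ctsd_unique nat_le_linear)

lemma se_notri: "LTri \<notin> leaves (se P)"
  by (induction P) (auto simp: leaves_repl)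

lemma Tterm_leaves: "Tterm P \<Longrightarrow> leaves (se P) = {LT}"
  by (induction rule: Tterm.induct) (auto simp: leaves_repl)

lemma Fterm_leaves: "Fterm P \<Longrightarrow> leaves (se P) = {LF}"
  by (induction rule: Fterm.induct) (auto simp: leaves_repl)

lemma leaves_sub_tri: "leaves U \<subseteq> {LTri} \<Longrightarrow> leaves (sub LTri V U) = leaves V"
  using leaves_ne[of U] by (auto simp: leaves_repl)

lemma indec_node: "leaves A \<inter> leaves B = {} \<Longrightarrow> indec (Node A a B)"
  unfolding indec_def
proof (rule notI, elim exE conjE)
  fix U V assume d: "leaves A \<inter> leaves B = {}" and h: "Node A a B = sub LTri V U"
    "LTri \<in> leaves U" "U \<noteq> Leaf LTri" "LT \<notin> leaves U" "LF \<notin> leaves U"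
  have u: "leaves U \<subseteq> {LTri}" using h tri_only by blast
  then obtain U1 U2 b where U: "U = Node U1 b U2" using h(3) by (cases U) auto
  have "A = sub LTri V U1" "B = sub LTri V U2" using h(1) U by auto
  moreover have "leaves U1 \<subseteq> {LTri}" "leaves U2 \<subseteq> {LTri}" using u U by auto
  ultimately have "leaves A = leaves V" "leaves B = leaves V" using leaves_sub_tri by metis+
  then show False using d leaves_ne[of V] by auto
qed

lemma lterm_prop: "lterm P \<Longrightarrow> LT \<in> leaves (se P) \<and> LF \<in> leaves (se P) \<and> indec (se P)"
proof (induction rule: lterm.induct)
  case (1 P Q a)
  have "se (LOr (LAnd (Atom a) P) Q) = Node (se P) a (se Q)"
    using sub_id[of LF "se P" "se Q"] Tterm_leaves[OF 1(1)] by simp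
  then show ?case using Tterm_leaves[OF 1(1)] Fterm_leaves[OF 1(2)] indec_node[of "se P" "se Q" a] by simp
next
  case (2 P Q a)
  have "se (LOr (LAnd (Neg (Atom a)) P) Q) = Node (se Q) a (se P)"
    using sub_id[of LF "se P" "se Q"] Tterm_leaves[OF 2(1)] by simp
  then show ?case using Tterm_leaves[OF 2(1)] Fterm_leaves[OF 2(2)] indec_node[of "se Q" "se P" a] by auto
qed

lemma comb_indec:
  assumes l: "l \<noteq> LTri" and S: "l \<in> leaves S" "indec S" and R: "indec R" "LTri \<notin> leaves R"
  shows "indec (sub l S R)"
  unfolding indec_def
proof (rule notI, elim exE conjE)
  fix U V assume h: "LTri \<notin> leaves V" "sub l S R = sub LTri V U"
    "LTri \<in> leaves U" "U \<noteq> Leaf LTri" "LT \<notin> leaves U" "LF \<notin> leaves U"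
  have u: "leaves U \<subseteq> {LTri}" using h tri_only by blast
  obtain W where w: "R = sub LTri W U" "V = sub l S W" using key[OF l S u R(2) h(1) h(2)] by blast
  have "leaves W = leaves R" using w(1) leaves_sub_tri[OF u] by simp
  then show False using R h w unfolding indec_def by metis
qed

lemma star_prop:
  "cterm P \<Longrightarrow> LT \<in> leaves (se P) \<and> LF \<in> leaves (se P) \<and> indec (se P)"
  "dterm P \<Longrightarrow> LT \<in> leaves (se P) \<and> LF \<in> leaves (se P) \<and> indec (se P)"
proof (induction rule: cterm_dterm.inducts)
  case (2 P Q) then show ?case using comb_indec[of LT "se Q" "se P"] se_notri[of P]
    by (auto simp: leaves_repl)
next
  case (3 P Q) then show ?case using comb_indec[of LT "se Q" "se P"] se_notri[of P]
    by (auto simp: leaves_repl)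
next
  case (5 P Q) then show ?case using comb_indec[of LF "se Q" "se P"] se_notri[of P]
    by (auto simp: leaves_repl)
next
  case (6 P Q) then show ?case using comb_indec[of LF "se Q" "se P"] se_notri[of P]
    by (auto simp: leaves_repl)
qed (auto dest: lterm_prop)

theorem theorem3p7:
  fixes P Q :: "'a pterm"
  assumes "Tterm P" and "starterm Q"
  shows "tsd (se (LAnd P Q)) (repl ((\<lambda>l. Leaf l)(LT := Leaf LTri)) (se P)) (se Q) \<and>
         (\<forall>Y Z. tsd (se (LAnd P Q)) Y Z \<longrightarrow>
            Y = repl ((\<lambda>l. Leaf l)(LT := Leaf LTri)) (se P) \<and> Z = se Q)"
proof -
  have sq: "LT \<in> leaves (se Q) \<and> LF \<in> leaves (se Q) \<and> indec (se Q)"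
    using assms(2) star_prop unfolding starterm_def by blast
  have lp: "leaves (se P) = {LT}" using Tterm_leaves[OF assms(1)] .
  have X: "se (LAnd P Q) = sub LTri (se Q) (sub LT (Leaf LTri) (se P))"
    unfolding repl_repl se.simps by (rule repl_cong) (use lp in auto)
  have Y: "leaves (sub LT (Leaf LTri) (se P)) = {LTri}" using lp by (simp add: leaves_repl)
  have c: "ctsd (se (LAnd P Q)) (sub LT (Leaf LTri) (se P)) (se Q)"
    unfolding ctsd_def using X Y sq se_notri[of Q] unfolding indec_def by auto
  show ?thesis using c ctsd_unique2 unfolding tsd_def by blast
qed

end
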